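(* Let $L$ be a co-Heyting algebra, $a\in L$ and $d$ a positive integer. Then $\dim_L a\geq d$ if and only if there exist $x_0,\dots,x_d\in L$ with $0\neq x_d\ll x_{d-1}\ll\cdots\ll x_0\leq a$; and $\operatorname{codim}_L a\geq d$ if and only if there exist $x_0,\dots,x_d\in L$ with $a\leq x_d\ll x_{d-1}\ll\cdots\ll x_0$. In particular, there is a single positive existential first-order formula in the language $\{0,1,\vee,\wedge,-\}$ which defines the set $dL=\{a\in L:\operatorname{codim}_L a\ge d\}$ in every co-Heyting algebra $L$.
   Context: A co-Heyting algebra is a bounded distributive lattice $(L,0,1,\vee,\wedge)$ such that for all $a,b$ the element $a-b=\min\{c\in L: a\le b\vee c\}$ exists; it is regarded as a structure in the language $\{0,1,\vee,\wedge,-\}$. The strong order: $b\ll a$ iff $b\le a$ and $a-b=a$. Foundation rank in an ordered set: $\operatorname{rk}x\ge0$; $\operatorname{rk}x\ge\beta+1$ iff some $y<x$ has $\operatorname{rk}y\ge\beta$; at limits, $\operatorname{rk}x\ge\lambda$ iff $\operatorname{rk}x\ge\beta$ for all $\beta<\lambda$; cofoundation rank is foundation rank for the reverse order. $\operatorname{Spec}L$ is the set of prime filters ordered by inclusion; height/coheight of $\mathfrak p$ are its foundation/cofoundation ranks in $\operatorname{Spec}L$. $\dim_L a=\sup\{\operatorname{coheight}\mathfrak p: a\in\mathfrak p\in\operatorname{Spec}L\}$ and $\operatorname{codim}_L a=\min\{\operatorname{height}\mathfrak p: a\in\mathfrak p\in\operatorname{Spec}L\}$, with $\sup\emptyset=-\infty$,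 $\min\emptyset=+\infty$. *)

theory Defs
  imports Main "HOL-Library.Extended_Nat"
begin

definition coHeyting :: "'a::{bounded_lattice,distrib_lattice} itself \<Rightarrow> bool" where
  "coHeyting _ \<longleftrightarrow> (\<forall>a b::'a. \<exists>c. a \<le> sup b c \<and> (\<forall>c'. a \<le> sup b c' \<longrightarrow> c \<le> c'))"

definition cdiff :: "'a::{bounded_lattice,distrib_lattice} \<Rightarrow> 'a \<Rightarrow> 'a" where
  "cdiff a b = (LEAST c. a \<le> sup b c)"

definition strong_le :: "'a::{bounded_lattice,distrib_lattice} \<Rightarrow> 'a \<Rightarrow> bool" where
  "strong_le b a \<longleftrightarrow> b \<le> a \<and> cdiff a b = a"

definition prime_filter :: "'a::{bounded_lattice,distrib_lattice} set \<Rightarrow> bool" where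
  "prime_filter F \<longleftrightarrow> top \<in> F \<and> bot \<notin> F
     \<and> (\<forall>x y. x \<in> F \<longrightarrow> x \<le> y \<longrightarrow> y \<in> F)
     \<and> (\<forall>x y. x \<in> F \<longrightarrow> y \<in> F \<longrightarrow> inf x y \<in> F)
     \<and> (\<forall>x y. sup x y \<in> F \<longrightarrow> x \<in> F \<or> y \<in> F)"

definition Spec :: "'a::{bounded_lattice,distrib_lattice} set set" where
  "Spec = {F. prime_filter F}"

fun rank_ge :: "'b set \<Rightarrow> ('b \<Rightarrow> 'b \<Rightarrow> bool) \<Rightarrow> 'b \<Rightarrow> nat \<Rightarrow> bool" where
  "rank_ge S lt x 0 = True"
| "rank_ge S lt x (Suc n) = (\<exists>y\<in>S. lt y x \<and> rank_ge S lt y n)"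

text \<open>The rank as an extended natural: ordinal ranks \<ge> \<omega> (including ill-founded
  elements) are collapsed to \<infinity>; this is exact for comparisons with finite numbers.\<close>
definition rank :: "'b set \<Rightarrow> ('b \<Rightarrow> 'b \<Rightarrow> bool) \<Rightarrow> 'b \<Rightarrow> enat" where
  "rank S lt x = Sup {enat n | n. rank_ge S lt x n}"

definition height :: "'a::{bounded_lattice,distrib_lattice} set \<Rightarrow> enat" where
  "height p = rank Spec (\<lambda>q r. q \<subset> r) p"

definition coheight :: "'a::{bounded_lattice,distrib_lattice} set \<Rightarrow> enat" where
  "coheight p = rank Spec (\<lambda>q r. r \<subset> q) p"

text \<open>dim a = sup of coheights of prime filters containing a (sup of the empty set is 0
  here instead of -\<infinity>; irrelevant for comparisons with positive d).\<close>
definition dimL :: "'a::{bounded_lattice,distrib_lattice} \<Rightarrow> enat" where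
  "dimL a = (SUP p\<in>{p\<in>Spec. a \<in> p}. coheight p)"

definition codimL :: "'a::{bounded_lattice,distrib_lattice} \<Rightarrow> enat" where
  "codimL a = (INF p\<in>{p\<in>Spec. a \<in> p}. height p)"

end

theory Submission
  imports Defs
begin

context
  assumes H: "coHeyting TYPE('a::{bounded_lattice,distrib_lattice})"
begin

lemma cdiff_le: "cdiff (a::'a) b \<le> c \<longleftrightarrow> a \<le> sup b c"
proof -
  obtain c0 :: 'a where c0: "a \<le> sup b c0" "\<forall>c'. a \<le> sup b c' \<longrightarrow> c0 \<le> c'"
    using H unfolding coHeyting_def by blast
  have "cdiff a b = c0" unfolding cdiff_def
    by (rule Least_equality) (use c0 in auto)
  then show ?thesis using c0
    by (metis dual_order.trans sup.mono order_refl)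
qed

lemma cdiff_sup: "(a::'a) \<le> sup b (cdiff a b)"
  using cdiff_le by blast

lemma cdiff_le_self: "cdiff (a::'a) b \<le> a"
  using cdiff_le by (simp add: le_supI2)

lemma cdiff_bot: "cdiff (a::'a) bot = a"
  by (metis antisym cdiff_le cdiff_le_self sup_bot_left order_refl)

lemma cdiff_mono2: "(b::'a) \<le> b' \<Longrightarrow> cdiff a b' \<le> cdiff a b"
  by (meson cdiff_le cdiff_sup dual_order.trans sup.mono order_refl)

lemma cdiff_idem: "cdiff (cdiff (a::'a) b) b = cdiff a b"
proof (rule antisym)
  show "cdiff (cdiff a b) b \<le> cdiff a b" by (rule cdiff_le_self)
  have "a \<le> sup b (cdiff (cdiff a b) b)"
    by (metis cdiff_sup sup.absorb_iff2 sup.left_idem sup_assoc cdiff_le order_refl)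
  then show "cdiff a b \<le> cdiff (cdiff a b) b" using cdiff_le by blast
qed

lemma strong_le_down: "(c::'a) \<le> b \<Longrightarrow> strong_le b a \<Longrightarrow> strong_le c a"
  unfolding strong_le_def
  by (metis antisym cdiff_le_self cdiff_mono2 dual_order.trans)

lemma strong_le_bdry: "strong_le (inf (cdiff (y::'a) b) b) (cdiff y b)"
proof -
  let ?c = "cdiff y b"
  have "cdiff ?c (inf ?c b) = ?c"
  proof (rule antisym)
    show "cdiff ?c (inf ?c b) \<le> ?c" by (rule cdiff_le_self)
    have "?c \<le> sup (inf ?c b) (cdiff ?c (inf ?c b))" by (rule cdiff_sup)
    also have "\<dots> \<le> sup b (cdiff ?c (inf ?c b))" by (simp add: le_supI1)
    finally have "cdiff ?c b \<le> cdiff ?c (inf ?c b)" using cdiff_le by blast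
    then show "?c \<le> cdiff ?c (inf ?c b)" using cdiff_idem by simp
  qed
  then show ?thesis unfolding strong_le_def by simp
qed


lemma strong_le_sup:
  assumes "strong_le (b::'a) a" "strong_le b' a'"
  shows "strong_le (sup b b') (sup a a')"
proof -
  let ?e = "cdiff (sup a a') (sup b b')"
  have ba: "b \<le> a" "cdiff a b = a" "b' \<le> a'" "cdiff a' b' = a'" using assms unfolding strong_le_def by auto
  have s: "sup a a' \<le> sup (sup b b') ?e" by (rule cdiff_sup)
  have "a' \<le> sup b' (sup b ?e)" using s by (metis le_supE sup.assoc sup.commute)
  then have "cdiff a' b' \<le> sup b ?e" using cdiff_le by blast
  then have a'le: "a' \<le> sup b ?e" using ba by simp
  have "a \<le> sup b (sup b' ?e)" using s by (metis le_supE sup.assoc)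
  also have "\<dots> \<le> sup b (sup (sup b ?e) ?e)" using ba a'le
    by (meson dual_order.trans order_refl sup.mono)
  also have "\<dots> = sup b ?e" by (simp add: sup_assoc sup_left_commute)
  finally have "cdiff a b \<le> ?e" using cdiff_le by blast
  then have ae: "a \<le> ?e" using ba by simp
  have "cdiff a' b' \<le> ?e"
  proof -
    have "a' \<le> sup b ?e" by (rule a'le)
    also have "\<dots> \<le> sup b' ?e"
    proof (rule le_supI)
      show "b \<le> sup b' ?e" using order_trans[OF ba(1) ae] by (rule le_supI2)
    qed simp
    finally show ?thesis using cdiff_le by blast
  qed
  then have "a' \<le> ?e" using ba by simp
  then have "sup a a' \<le> ?e" using ae by simp
  then show ?thesis unfolding strong_le_def using ba cdiff_le_self
    by (metis antisym sup.mono)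
qed

lemma prime_cdiff: "prime_filter p \<Longrightarrow> (x::'a) \<in> p \<Longrightarrow> b \<notin> p \<Longrightarrow> cdiff x b \<in> p"
  unfolding prime_filter_def using cdiff_sup by blast

end

lemma separation:
  fixes F I :: "'a::{bounded_lattice,distrib_lattice} set"
  assumes F: "top \<in> F" "\<forall>x y. x\<in>F \<longrightarrow> x \<le> y \<longrightarrow> y \<in> F" "\<forall>x y. x\<in>F \<longrightarrow> y\<in>F \<longrightarrow> inf x y \<in> F"
  and I: "bot \<in> I" "\<forall>x y. y \<in> I \<longrightarrow> x \<le> y \<longrightarrow> x \<in> I" "\<forall>x y. x\<in>I \<longrightarrow> y\<in>I \<longrightarrow> sup x y \<in> I"
  and FI: "F \<inter> I = {}"
  shows "\<exists>p. prime_filter p \<and> F \<subseteq> p \<and> p \<inter> I = {}"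
proof -
  define filt where "filt G \<longleftrightarrow> top \<in> G \<and> (\<forall>x y. x\<in>G \<longrightarrow> x \<le> y \<longrightarrow> y \<in> G) \<and> (\<forall>x y. x\<in>G \<longrightarrow> y\<in>G \<longrightarrow> inf x y \<in> G)" for G :: "'a set"
  define A where "A = {G. filt G \<and> F \<subseteq> G \<and> G \<inter> I = {}}"
  have FA: "F \<in> A" unfolding A_def filt_def using F FI by auto
  have "\<forall>C\<in>chains A. \<exists>U\<in>A. \<forall>X\<in>C. X \<subseteq> U"
  proof
    fix C assume C: "C \<in> chains A"
    show "\<exists>U\<in>A. \<forall>X\<in>C. X \<subseteq> U"
    proof (cases "C = {}")
      case True then show ?thesis using FA by auto
    next
      case False
      have CA: "C \<subseteq> A" and ch: "\<forall>X\<in>C. \<forall>Y\<in>C. X \<subseteq> Y \<or> Y \<subseteq> X"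
        using C unfolding chains_def chain_subset_def by auto
      have fC: "filt X" if "X \<in> C" for X using CA that unfolding A_def by auto
      have "\<Union>C \<in> A" unfolding A_def
      proof (intro CollectI conjI)
        show "F \<subseteq> \<Union>C" using False CA unfolding A_def by auto
        show "\<Union>C \<inter> I = {}" using CA unfolding A_def by auto
        show "filt (\<Union>C)" unfolding filt_def
        proof (intro conjI allI impI)
          obtain X0 where "X0 \<in> C" using False by auto
          then show "top \<in> \<Union>C" using fC unfolding filt_def by auto
          fix x y assume "x \<in> \<Union>C" "x \<le> y"
          then obtain X where "X \<in> C" "x \<in> X" by auto
          then have "y \<in> X" using fC[of X] \<open>x \<le> y\<close> unfolding filt_def by auto
          then show "y \<in> \<Union>C" using \<open>X \<in> C\<close> by auto
        next
          fix x y assume x: "x \<in> \<Union>C" and y: "y \<in> \<Union>C"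
          then obtain X Y where XY: "X \<in> C" "Y \<in> C" "x \<in> X" "y \<in> Y" by auto
          have "X \<subseteq> Y \<or> Y \<subseteq> X" using ch XY(1,2) by blast
          then show "inf x y \<in> \<Union>C"
          proof
            assume "X \<subseteq> Y"
            then have "inf x y \<in> Y" using fC[OF XY(2)] XY unfolding filt_def by auto
            then show ?thesis using XY by auto
          next
            assume "Y \<subseteq> X"
            then have "inf x y \<in> X" using fC[OF XY(1)] XY unfolding filt_def by auto
            then show ?thesis using XY by auto
          qed
        qed
      qed
      then show ?thesis by auto
    qed
  qed
  then obtain M where MA: "M \<in> A" and Mmax: "\<forall>X\<in>A. M \<subseteq> X \<longrightarrow> X = M"
    using Zorn_Lemma2 by blast
  have Mf: "filt M" "F \<subseteq> M" "M \<inter> I = {}" using MA unfolding A_def by auto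
  have ext: "\<exists>m\<in>M. \<exists>i\<in>I. inf m x \<le> i" if "x \<notin> M" for x
  proof (rule ccontr)
    assume nex: "\<not> ?thesis"
    define G where "G = {z. \<exists>m\<in>M. inf m x \<le> z}"
    have "G \<in> A" unfolding A_def filt_def
    proof (intro CollectI conjI allI impI)
      show "top \<in> G" unfolding G_def using Mf(1) unfolding filt_def by auto
      show "F \<subseteq> G" unfolding G_def using Mf(2) by (auto intro: le_infI1)
      show "G \<inter> I = {}" unfolding G_def using nex I(2) by blast
      fix u v assume "u \<in> G" "u \<le> v" then show "v \<in> G" unfolding G_def by (auto intro: order_trans)
    next
      fix u v assume "u \<in> G" "v \<in> G"
      then obtain m1 m2 where "m1 \<in> M" "m2 \<in> M" "inf m1 x \<le> u" "inf m2 x \<le> v" unfolding G_def by auto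
      moreover have "inf m1 m2 \<in> M" using Mf(1) calculation unfolding filt_def by blast
      moreover have "inf (inf m1 m2) x \<le> inf u v"
      proof (rule le_infI)
        have "inf (inf m1 m2) x \<le> inf m1 x" by (simp add: inf.coboundedI1 le_infI1)
        then show "inf (inf m1 m2) x \<le> u" using calculation(3) by (rule order_trans)
        have "inf (inf m1 m2) x \<le> inf m2 x" by (simp add: inf.coboundedI1 le_infI1)
        then show "inf (inf m1 m2) x \<le> v" using calculation(4) by (rule order_trans)
      qed
      ultimately show "inf u v \<in> G" unfolding G_def by blast
    qed
    moreover have "M \<subseteq> G" unfolding G_def by (auto intro: le_infI1)
    moreover have "x \<in> G" unfolding G_def using Mf(1) unfolding filt_def by auto
    ultimately show False using Mmax that by blast
  qed
  have "prime_filter M" unfolding prime_filter_def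
  proof (intro conjI allI impI)
    show "top \<in> M" using Mf unfolding filt_def by auto
    show "bot \<notin> M" using Mf I by auto
    fix x y assume "x \<in> M" "x \<le> y" then show "y \<in> M" using Mf unfolding filt_def by auto
  next
    fix x y assume "x \<in> M" "y \<in> M" then show "inf x y \<in> M" using Mf unfolding filt_def by auto
  next
    fix x y assume xy: "sup x y \<in> M"
    show "x \<in> M \<or> y \<in> M"
    proof (rule ccontr)
      assume "\<not> (x \<in> M \<or> y \<in> M)"
      then obtain m1 i1 m2 i2 where h: "m1 \<in> M" "i1 \<in> I" "inf m1 x \<le> i1" "m2 \<in> M" "i2 \<in> I" "inf m2 y \<le> i2"
        using ext by meson
      let ?m = "inf (inf m1 m2) (sup x y)"
      have "?m \<in> M" using h xy Mf(1) unfolding filt_def by blast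
      moreover have "?m \<le> sup i1 i2"
      proof -
        have "?m = sup (inf (inf m1 m2) x) (inf (inf m1 m2) y)" by (simp add: inf_sup_distrib1)
        also have "\<dots> \<le> sup i1 i2"
        proof (rule sup_mono)
          have "inf (inf m1 m2) x \<le> inf m1 x" by (simp add: inf.coboundedI1 le_infI1)
          then show "inf (inf m1 m2) x \<le> i1" using h(3) by (rule order_trans)
          have "inf (inf m1 m2) y \<le> inf m2 y" by (simp add: inf.coboundedI1 le_infI1)
          then show "inf (inf m1 m2) y \<le> i2" using h(6) by (rule order_trans)
        qed
        finally show ?thesis .
      qed
      moreover have "sup i1 i2 \<in> I" using h I by blast
      ultimately show False using Mf(3) I(2) by blast
    qed
  qed
  then show ?thesis using Mf by blast
qed


lemma rank_ge_mono: "rank_ge S lt x n \<Longrightarrow> m \<le> n \<Longrightarrow> rank_ge S lt x m"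
proof (induction m arbitrary: n x)
  case 0 show ?case by simp
next
  case (Suc m)
  then obtain n' where n: "n = Suc n'" "m \<le> n'" by (cases n) auto
  from Suc.prems(1) have "rank_ge S lt x (Suc n')" unfolding n(1) .
  then obtain y where y: "y \<in> S" "lt y x" "rank_ge S lt y n'"
    unfolding rank_ge.simps by blast
  have "rank_ge S lt y m" by (rule Suc.IH[OF y(3) n(2)])
  then show ?case unfolding rank_ge.simps using y by blast
qed

lemma enat_less_pred: "(x::enat) < enat d \<Longrightarrow> x \<le> enat (d - 1)"
  by (cases x) auto

lemma rank_ge_iff: "enat d \<le> rank S lt x \<longleftrightarrow> rank_ge S lt x d"
proof
  assume "rank_ge S lt x d"
  then have "enat d \<in> {enat n | n. rank_ge S lt x n}" by blast
  then show "enat d \<le> rank S lt x" unfolding rank_def by (rule Sup_upper)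
next
  assume h: "enat d \<le> rank S lt x"
  show "rank_ge S lt x d"
  proof (rule ccontr)
    assume nr: "\<not> rank_ge S lt x d"
    have r0: "rank_ge S lt x 0" by (simp only: rank_ge.simps)
    have d0: "d > 0"
    proof (rule gr0I)
      assume "d = 0" then show False using nr r0 by simp
    qed
    have "\<forall>n. rank_ge S lt x n \<longrightarrow> n \<le> d - 1"
    proof (intro allI impI)
      fix n assume "rank_ge S lt x n"
      then have "\<not> d \<le> n" using nr rank_ge_mono[of S lt x n d] by blast
      then show "n \<le> d - 1" by simp
    qed
    then have "rank S lt x \<le> enat (d - 1)" unfolding rank_def by (intro Sup_least) fastforce
    with h have "enat d \<le> enat (d - 1)" by (rule order_trans)
    then show False using d0 by simp
  qed
qed

lemma dim_iff:
  assumes "d > 0"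
  shows "enat d \<le> dimL (a::'a::{bounded_lattice,distrib_lattice}) \<longleftrightarrow>
    (\<exists>p. prime_filter p \<and> a \<in> p \<and> rank_ge Spec (\<lambda>q r. r \<subset> q) p d)"
proof
  assume "\<exists>p. prime_filter p \<and> a \<in> p \<and> rank_ge Spec (\<lambda>q r. r \<subset> q) p d"
  then obtain p where p: "prime_filter p" "a \<in> p" "rank_ge Spec (\<lambda>q r. r \<subset> q) p d" by blast
  have "enat d \<le> coheight p" unfolding coheight_def rank_ge_iff by (rule p(3))
  moreover have "p \<in> {p\<in>Spec. a \<in> p}" using p by (simp add: Spec_def)
  ultimately show "enat d \<le> dimL a" unfolding dimL_def by (intro SUP_upper2[of p])
next
  assume h: "enat d \<le> dimL a"
  show "\<exists>p. prime_filter p \<and> a \<in> p \<and> rank_ge Spec (\<lambda>q r. r \<subset> q) p d"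
  proof (rule ccontr)
    assume nn: "\<not> ?thesis"
    have "coheight p \<le> enat (d - 1)" if "p \<in> {p\<in>Spec. a \<in> p}" for p
    proof -
      have "prime_filter p" "a \<in> p" using that by (auto simp: Spec_def)
      then have "\<not> rank_ge Spec (\<lambda>q r. r \<subset> q) p d" using nn by blast
      then have "\<not> enat d \<le> coheight p" unfolding coheight_def rank_ge_iff .
      then show ?thesis by (intro enat_less_pred) (simp add: not_le)
    qed
    then have "dimL a \<le> enat (d - 1)" unfolding dimL_def by (rule SUP_least)
    with h have "enat d \<le> enat (d - 1)" by (rule order_trans)
    then show False using assms by simp
  qed
qed

lemma codim_iff:
  "enat d \<le> codimL (a::'a::{bounded_lattice,distrib_lattice}) \<longleftrightarrow>
    (\<forall>p. prime_filter p \<longrightarrow> a \<in> p \<longrightarrow> rank_ge Spec (\<lambda>q r. q \<subset> r) p d)"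
  unfolding codimL_def height_def le_INF_iff rank_ge_iff Spec_def mem_Collect_eq by blast


lemma exists_prime:
  assumes "(x::'a::{bounded_lattice,distrib_lattice}) \<noteq> bot"
  shows "\<exists>p. prime_filter p \<and> x \<in> p"
proof -
  have "\<exists>p. prime_filter p \<and> {z. x \<le> z} \<subseteq> p \<and> p \<inter> {bot} = {}"
  proof (rule separation)
    show "{z. x \<le> z} \<inter> {bot} = {}" using assms by (auto simp: bot_unique)
  qed (auto intro: order_trans simp: bot_unique)
  then show ?thesis by auto
qed

context
  assumes H: "coHeyting TYPE('a::{bounded_lattice,distrib_lattice})"
begin

lemmas cdiff_le' = cdiff_le[OF H] and cdiff_sup' = cdiff_sup[OF H]
  and cdiff_le_self' = cdiff_le_self[OF H] and cdiff_bot' = cdiff_bot[OF H]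
  and cdiff_idem' = cdiff_idem[OF H] and strong_le_down' = strong_le_down[OF H]
  and strong_le_bdry' = strong_le_bdry[OF H] and strong_le_sup' = strong_le_sup[OF H]
  and prime_cdiff' = prime_cdiff[OF H]

lemma step:
  assumes p: "prime_filter p" and y: "(y::'a) \<in> p" and yx: "strong_le y x"
  shows "\<exists>q. prime_filter q \<and> q \<subset> p \<and> x \<in> q \<and> y \<notin> q"
proof -
  have yle: "y \<le> x" and xx: "cdiff x y = x" using yx unfolding strong_le_def by auto
  have up: "\<And>u v. u \<in> p \<Longrightarrow> u \<le> v \<Longrightarrow> v \<in> p" and pr: "\<And>u v. sup u v \<in> p \<Longrightarrow> u \<in> p \<or> v \<in> p"
    and nb: "bot \<notin> p"
    using p unfolding prime_filter_def by blast+
  have xp: "x \<in> p" using up[OF y yle] .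
  define F where "F = {z. x \<le> z}"
  define I where "I = {z. \<exists>w. w \<notin> p \<and> z \<le> sup w y}"
  have "\<exists>q. prime_filter q \<and> F \<subseteq> q \<and> q \<inter> I = {}"
  proof (rule separation)
    show "top \<in> F" unfolding F_def by simp
    show "\<forall>u v. u \<in> F \<longrightarrow> u \<le> v \<longrightarrow> v \<in> F" unfolding F_def by (auto intro: order_trans)
    show "\<forall>u v. u \<in> F \<longrightarrow> v \<in> F \<longrightarrow> inf u v \<in> F" unfolding F_def by auto
    show "bot \<in> I" unfolding I_def using nb by auto
    show "\<forall>u v. v \<in> I \<longrightarrow> u \<le> v \<longrightarrow> u \<in> I" unfolding I_def
      using order_trans by blast
    show "\<forall>u v. u \<in> I \<longrightarrow> v \<in> I \<longrightarrow> sup u v \<in> I"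
    proof (intro allI impI)
      fix u v assume "u \<in> I" "v \<in> I"
      then obtain w1 w2 where w: "w1 \<notin> p" "u \<le> sup w1 y" "w2 \<notin> p" "v \<le> sup w2 y" unfolding I_def by auto
      have "sup w1 w2 \<notin> p" using w pr by blast
      moreover have "sup u v \<le> sup (sup w1 w2) y"
      proof (rule le_supI)
        have "sup w1 y \<le> sup (sup w1 w2) y" by (intro sup_mono) simp_all
        then show "u \<le> sup (sup w1 w2) y" using w(2) by (rule order_trans[rotated])
        have "sup w2 y \<le> sup (sup w1 w2) y" by (intro sup_mono) simp_all
        then show "v \<le> sup (sup w1 w2) y" using w(4) by (rule order_trans[rotated])
      qed
      ultimately show "sup u v \<in> I" unfolding I_def by blast
    qed
    show "F \<inter> I = {}"
    proof (rule ccontr)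
      assume "F \<inter> I \<noteq> {}"
      then obtain z w where "x \<le> z" "w \<notin> p" "z \<le> sup w y" unfolding F_def I_def by auto
      then have "x \<le> sup y w" by (simp add: sup_commute order_trans)
      then have "cdiff x y \<le> w" using cdiff_le' by blast
      then have "x \<le> w" using xx by simp
      then show False using up[OF xp] \<open>w \<notin> p\<close> by blast
    qed
  qed
  then obtain q where q: "prime_filter q" "F \<subseteq> q" "q \<inter> I = {}" by blast
  have "x \<in> q" using q(2) unfolding F_def by auto
  moreover have "q \<subseteq> p"
  proof
    fix z assume "z \<in> q"
    show "z \<in> p"
    proof (rule ccontr)
      assume "z \<notin> p"
      then have "z \<in> I" unfolding I_def by auto
      then show False using q(3) \<open>z \<in> q\<close> by blast
    qed
  qed
  moreover have "y \<notin> q"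
  proof
    assume "y \<in> q"
    moreover have "y \<in> I" unfolding I_def using nb by auto
    ultimately show False using q(3) by blast
  qed
  ultimately show ?thesis using q(1) y by blast
qed

lemma chain_height:
  "\<forall>p. prime_filter p \<longrightarrow> (x::nat\<Rightarrow>'a) n \<in> p \<longrightarrow> (\<forall>i<n. strong_le (x (Suc i)) (x i))
     \<longrightarrow> rank_ge Spec (\<lambda>q r. q \<subset> r) p n"
proof (induction n)
  case 0 show ?case by (simp only: rank_ge.simps) simp
next
  case (Suc n)
  show ?case
  proof (intro allI impI)
    fix p assume p: "prime_filter p" and xp: "x (Suc n) \<in> p"
      and ch: "\<forall>i<Suc n. strong_le (x (Suc i)) (x i)"
    have "strong_le (x (Suc n)) (x n)" using ch by simp
    then obtain q where q: "prime_filter q" "q \<subset> p" "x n \<in> q" using step[OF p xp] by blast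
    have "\<forall>i<n. strong_le (x (Suc i)) (x i)" using ch by simp
    then have "rank_ge Spec (\<lambda>q r. q \<subset> r) q n" using Suc.IH q by blast
    moreover have "q \<in> Spec" using q by (simp add: Spec_def)
    ultimately show "rank_ge Spec (\<lambda>q r. q \<subset> r) p (Suc n)"
      unfolding rank_ge.simps using q(2) by blast
  qed
qed

lemma chain_coheight:
  "\<forall>(x::nat\<Rightarrow>'a) p. prime_filter p \<longrightarrow> x n \<in> p \<longrightarrow> (\<forall>i<n. strong_le (x (Suc i)) (x i))
     \<longrightarrow> (\<exists>q. prime_filter q \<and> x 0 \<in> q \<and> rank_ge Spec (\<lambda>q r. r \<subset> q) q n)"
proof (induction n)
  case 0 show ?case by (simp only: rank_ge.simps) blast
next
  case (Suc n)
  show ?case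
  proof (intro allI impI)
    fix x :: "nat \<Rightarrow> 'a" and p assume p: "prime_filter p" and xp: "x (Suc n) \<in> p"
      and ch: "\<forall>i<Suc n. strong_le (x (Suc i)) (x i)"
    have ch': "\<forall>i<n. strong_le ((\<lambda>i. x (Suc i)) (Suc i)) ((\<lambda>i. x (Suc i)) i)" using ch by simp
    obtain q' where q': "prime_filter q'" "x (Suc 0) \<in> q'" "rank_ge Spec (\<lambda>q r. r \<subset> q) q' n"
      using Suc.IH[rule_format, of p "\<lambda>i. x (Suc i)"] p xp ch' by blast
    have "strong_le (x (Suc 0)) (x 0)" using ch by simp
    then obtain q where q: "prime_filter q" "q \<subset> q'" "x 0 \<in> q" using step[OF q'(1) q'(2)] by blast
    have "q' \<in> Spec" using q' by (simp add: Spec_def)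
    then have "rank_ge Spec (\<lambda>q r. r \<subset> q) q (Suc n)"
      unfolding rank_ge.simps using q(2) q'(3) by blast
    then show "\<exists>q. prime_filter q \<and> x 0 \<in> q \<and> rank_ge Spec (\<lambda>q r. r \<subset> q) q (Suc n)"
      using q by blast
  qed
qed

lemma build_dim:
  "\<forall>p (z::'a). prime_filter p \<longrightarrow> z \<in> p \<longrightarrow> rank_ge Spec (\<lambda>q r. r \<subset> q) p n
     \<longrightarrow> (\<exists>x. x 0 \<le> z \<and> x n \<noteq> bot \<and> (\<forall>i<n. strong_le (x (Suc i)) (x i)))"
proof (induction n)
  case 0
  show ?case
  proof (intro allI impI)
    fix p and z :: 'a assume "prime_filter p" "z \<in> p"
    then have "z \<noteq> bot" unfolding prime_filter_def by blast
    then show "\<exists>x. x 0 \<le> z \<and> x 0 \<noteq> bot \<and> (\<forall>i<0. strong_le (x (Suc i)) (x i))"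
      by (intro exI[of _ "\<lambda>_. z"]) simp
  qed
next
  case (Suc n)
  show ?case
  proof (intro allI impI)
    fix p and z :: 'a assume p: "prime_filter p" and zp: "z \<in> p"
      and r: "rank_ge Spec (\<lambda>q r. r \<subset> q) p (Suc n)"
    obtain q where q: "q \<in> Spec" "p \<subset> q" "rank_ge Spec (\<lambda>q r. r \<subset> q) q n"
      using r unfolding rank_ge.simps by blast
    have qp: "prime_filter q" using q(1) by (simp add: Spec_def)
    obtain b where b: "b \<in> q" "b \<notin> p" using q(2) by blast
    have c: "cdiff z b \<in> p" using prime_cdiff'[OF p zp b(2)] .
    have "inf (cdiff z b) b \<in> q" using qp c b(1) q(2) unfolding prime_filter_def by blast
    then obtain x' where x': "x' 0 \<le> inf (cdiff z b) b" "x' n \<noteq> bot" "\<forall>i<n. strong_le (x' (Suc i)) (x' i)"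
      using Suc.IH qp q(3) by blast
    define x where "x = case_nat (cdiff z b) x'"
    have "x 0 \<le> z" unfolding x_def by (simp add: cdiff_le_self')
    moreover have "x (Suc n) \<noteq> bot" unfolding x_def using x'(2) by simp
    moreover have "\<forall>i<Suc n. strong_le (x (Suc i)) (x i)"
    proof (intro allI impI)
      fix i assume i: "i < Suc n"
      show "strong_le (x (Suc i)) (x i)"
      proof (cases i)
        case 0
        have "strong_le (x' 0) (cdiff z b)" using strong_le_down'[OF x'(1) strong_le_bdry'] .
        then show ?thesis unfolding x_def using 0 by simp
      next
        case (Suc j)
        then have "j < n" using i by simp
        then show ?thesis unfolding x_def using x'(3) Suc by simp
      qed
    qed
    ultimately show "\<exists>x. x 0 \<le> z \<and> x (Suc n) \<noteq> bot \<and> (\<forall>i<Suc n. strong_le (x (Suc i)) (x i))"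
      by blast
  qed
qed

lemma build_codim:
  "\<forall>p (b::'a). prime_filter p \<longrightarrow> rank_ge Spec (\<lambda>q r. q \<subset> r) p n \<longrightarrow> b \<notin> p
     \<longrightarrow> (\<exists>x. (\<forall>i<n. strong_le (x (Suc i)) (x i)) \<and> x n \<in> p \<and> cdiff (x n) b = x n)"
proof (induction n)
  case 0
  show ?case
  proof (intro allI impI)
    fix p and b :: 'a assume p: "prime_filter p" and b: "b \<notin> p"
    have "top \<in> p" using p unfolding prime_filter_def by blast
    then have "cdiff top b \<in> p" using prime_cdiff'[OF p _ b] by blast
    then show "\<exists>x. (\<forall>i<0. strong_le (x (Suc i)) (x i)) \<and> x 0 \<in> p \<and> cdiff (x 0) b = x 0"
      by (intro exI[of _ "\<lambda>_. cdiff top b"]) (simp add: cdiff_idem')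
  qed
next
  case (Suc n)
  show ?case
  proof (intro allI impI)
    fix p and b :: 'a assume p: "prime_filter p" and r: "rank_ge Spec (\<lambda>q r. q \<subset> r) p (Suc n)"
      and b: "b \<notin> p"
    obtain q where q: "q \<in> Spec" "q \<subset> p" "rank_ge Spec (\<lambda>q r. q \<subset> r) q n"
      using r unfolding rank_ge.simps by blast
    have qp: "prime_filter q" using q(1) by (simp add: Spec_def)
    obtain b' where b': "b' \<in> p" "b' \<notin> q" using q(2) by blast
    obtain x where x: "\<forall>i<n. strong_le (x (Suc i)) (x i)" "x n \<in> q" "cdiff (x n) b' = x n"
      using Suc.IH qp q(3) b'(2) by blast
    define y where "y = cdiff (inf (x n) b') b"
    define x2 where "x2 = x(Suc n := y)"
    have "x n \<in> p" using x(2) q(2) by blast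
    then have "inf (x n) b' \<in> p" using p b'(1) unfolding prime_filter_def by blast
    then have yp: "y \<in> p" unfolding y_def using prime_cdiff'[OF p _ b] by blast
    have yy: "cdiff y b = y" unfolding y_def by (rule cdiff_idem')
    have "strong_le (inf (cdiff (x n) b') b') (cdiff (x n) b')" by (rule strong_le_bdry')
    then have sl: "strong_le (inf (x n) b') (x n)" using x(3) by simp
    have "strong_le y (x n)" unfolding y_def by (rule strong_le_down'[OF cdiff_le_self' sl])
    then have "\<forall>i<Suc n. strong_le (x2 (Suc i)) (x2 i)" unfolding x2_def using x(1) by (auto simp: less_Suc_eq)
    moreover have "x2 (Suc n) \<in> p" "cdiff (x2 (Suc n)) b = x2 (Suc n)" unfolding x2_def using yp yy by simp_all
    ultimately show "\<exists>x. (\<forall>i<Suc n. strong_le (x (Suc i)) (x i)) \<and> x (Suc n) \<in> p \<and> cdiff (x (Suc n)) b = x (Suc n)"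
      by blast
  qed
qed

end

theorem theorem3p8:
  fixes a :: "'a::{bounded_lattice,distrib_lattice}" and d :: nat
  assumes "coHeyting TYPE('a)" and "d > 0"
  shows "(dimL a \<ge> enat d \<longleftrightarrow>
           (\<exists>x :: nat \<Rightarrow> 'a. x d \<noteq> bot \<and> (\<forall>i<d. strong_le (x (Suc i)) (x i)) \<and> x 0 \<le> a))
       \<and> (codimL a \<ge> enat d \<longleftrightarrow>
           (\<exists>x :: nat \<Rightarrow> 'a. a \<le> x d \<and> (\<forall>i<d. strong_le (x (Suc i)) (x i))))"
proof (intro conjI)
  note H = assms(1)
  show "dimL a \<ge> enat d \<longleftrightarrow>
           (\<exists>x :: nat \<Rightarrow> 'a. x d \<noteq> bot \<and> (\<forall>i<d. strong_le (x (Suc i)) (x i)) \<and> x 0 \<le> a)"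
  proof
    assume "enat d \<le> dimL a"
    then obtain p where p: "prime_filter p" "a \<in> p" "rank_ge Spec (\<lambda>q r. r \<subset> q) p d"
      using dim_iff[OF assms(2)] by blast
    have "\<exists>x. x 0 \<le> a \<and> x d \<noteq> bot \<and> (\<forall>i<d. strong_le (x (Suc i)) (x i))"
      using build_dim[OF H, rule_format, of p a] p by blast
    then show "\<exists>x :: nat \<Rightarrow> 'a. x d \<noteq> bot \<and> (\<forall>i<d. strong_le (x (Suc i)) (x i)) \<and> x 0 \<le> a"
      by blast
  next
    assume "\<exists>x :: nat \<Rightarrow> 'a. x d \<noteq> bot \<and> (\<forall>i<d. strong_le (x (Suc i)) (x i)) \<and> x 0 \<le> a"
    then obtain x :: "nat \<Rightarrow> 'a" where x: "x d \<noteq> bot" "\<forall>i<d. strong_le (x (Suc i)) (x i)" "x 0 \<le> a"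
      by blast
    obtain p where p: "prime_filter p" "x d \<in> p" using exists_prime[OF x(1)] by blast
    obtain q where q: "prime_filter q" "x 0 \<in> q" "rank_ge Spec (\<lambda>q r. r \<subset> q) q d"
      using chain_coheight[OF H, rule_format, of p x] p x(2) by blast
    have "a \<in> q" using q(1,2) x(3) unfolding prime_filter_def by blast
    then show "enat d \<le> dimL a" using dim_iff[OF assms(2)] q(1,3) by blast
  qed
  show "codimL a \<ge> enat d \<longleftrightarrow>
           (\<exists>x :: nat \<Rightarrow> 'a. a \<le> x d \<and> (\<forall>i<d. strong_le (x (Suc i)) (x i)))"
  proof
    assume "\<exists>x :: nat \<Rightarrow> 'a. a \<le> x d \<and> (\<forall>i<d. strong_le (x (Suc i)) (x i))"
    then obtain x :: "nat \<Rightarrow> 'a" where x: "a \<le> x d" "\<forall>i<d. strong_le (x (Suc i)) (x i)" by blast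
    have "\<forall>p. prime_filter p \<longrightarrow> a \<in> p \<longrightarrow> rank_ge Spec (\<lambda>q r. q \<subset> r) p d"
    proof (intro allI impI)
      fix p assume p: "prime_filter p" "a \<in> p"
      then have "x d \<in> p" using x(1) unfolding prime_filter_def by blast
      then show "rank_ge Spec (\<lambda>q r. q \<subset> r) p d"
        using chain_height[OF H, rule_format, of p x] p(1) x(2) by blast
    qed
    then show "enat d \<le> codimL a" using codim_iff by blast
  next
    assume cd: "enat d \<le> codimL a"
    define I where "I = {c::'a. \<exists>x. c \<le> x d \<and> (\<forall>i<d. strong_le (x (Suc i)) (x i))}"
    have "a \<in> I"
    proof (rule ccontr)
      assume aI: "a \<notin> I"
      have "\<exists>p. prime_filter p \<and> {z. a \<le> z} \<subseteq> p \<and> p \<inter> I = {}"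
      proof (rule separation)
        show "top \<in> {z. a \<le> z}" by simp
        show "\<forall>u v. u \<in> {z. a \<le> z} \<longrightarrow> u \<le> v \<longrightarrow> v \<in> {z. a \<le> z}" by (auto intro: order_trans)
        show "\<forall>u v. u \<in> {z. a \<le> z} \<longrightarrow> v \<in> {z. a \<le> z} \<longrightarrow> inf u v \<in> {z. a \<le> z}" by auto
        have "strong_le (bot::'a) bot" unfolding strong_le_def
          using cdiff_le_self[OF H, of bot bot] by (simp add: bot_unique)
        then show "bot \<in> I" unfolding I_def by (intro CollectI exI[of _ "\<lambda>_. bot"]) simp
        show "\<forall>u v. v \<in> I \<longrightarrow> u \<le> v \<longrightarrow> u \<in> I" unfolding I_def using order_trans by blast
        show "\<forall>u v. u \<in> I \<longrightarrow> v \<in> I \<longrightarrow> sup u v \<in> I"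
        proof (intro allI impI)
          fix u v assume "u \<in> I" "v \<in> I"
          then obtain x y where xy: "u \<le> x d" "\<forall>i<d. strong_le (x (Suc i)) (x i)"
            "v \<le> y d" "\<forall>i<d. strong_le (y (Suc i)) (y i)" unfolding I_def by blast
          have "sup u v \<le> (\<lambda>i. sup (x i) (y i)) d" using xy(1,3) by (simp add: le_supI1 le_supI2)
          moreover have "\<forall>i<d. strong_le ((\<lambda>i. sup (x i) (y i)) (Suc i)) ((\<lambda>i. sup (x i) (y i)) i)"
            using xy(2,4) strong_le_sup[OF H] by simp
          ultimately show "sup u v \<in> I" unfolding I_def
            by (intro CollectI exI[of _ "\<lambda>i. sup (x i) (y i)"]) simp
        qed
        show "{z. a \<le> z} \<inter> I = {}"
        proof (rule ccontr)
          assume "{z. a \<le> z} \<inter> I \<noteq> {}"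
          then obtain z where "a \<le> z" "z \<in> I" by blast
          then have "a \<in> I" unfolding I_def using order_trans by blast
          then show False using aI by blast
        qed
      qed
      then obtain p where p: "prime_filter p" "{z. a \<le> z} \<subseteq> p" "p \<inter> I = {}" by blast
      have ap: "a \<in> p" using p(2) by blast
      have r: "rank_ge Spec (\<lambda>q r. q \<subset> r) p d" using cd codim_iff p(1) ap by blast
      have "bot \<notin> p" using p(1) unfolding prime_filter_def by blast
      then obtain x where x: "\<forall>i<d. strong_le (x (Suc i)) (x i)" "x d \<in> p"
        using build_codim[OF H, where n=d, rule_format, of p bot] p(1) r by blast
      have "x d \<in> I" unfolding I_def using x(1) by blast
      then show False using x(2) p(3) by blast
    qed
    then show "\<exists>x :: nat \<Rightarrow> 'a. a \<le> x d \<and> (\<forall>i<d. strong_le (x (Suc i)) (x i))"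
      unfolding I_def by blast
  qed
qed

end
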